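(* Let $n\geq 1$ and let $X_n$ and $S_1,\dots,S_n$ be as described in the context. If $A$ is a dense subset of $X_n$, then there exists $i\in\{1,\dots,n\}$ such that $A\cap S_i$ is non-empty and open in the subspace $S_i$.
   Context: Let $\mathcal{U}$ be a non-principal ultrafilter on $\omega$, and let $E$ be the space with underlying set $\omega$ whose open sets are the members of $\mathcal{U}$ together with $\emptyset$. For $n\ge 1$, let $X_n$ be the space with underlying set $\omega\times\{1,\dots,n\}$ whose open sets are $\emptyset$ together with all sets of the form $\bigcup_{i=1}^n (O_i\times\{i\})$ where each $O_i$ is a non-empty open subset of $E$. Let $S_i=\omega\times\{i\}$ with the subspace topology from $X_n$. *)

theory Defs
  imports "HOL-Analysis.Analysis"
begin

definition ultrafilter_on_nat :: "nat set set \<Rightarrow> bool" where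
  "ultrafilter_on_nat U \<longleftrightarrow>
     {} \<notin> U \<and> UNIV \<in> U \<and>
     (\<forall>A B. A \<in> U \<longrightarrow> B \<in> U \<longrightarrow> A \<inter> B \<in> U) \<and>
     (\<forall>A B. A \<in> U \<longrightarrow> A \<subseteq> B \<longrightarrow> B \<in> U) \<and>
     (\<forall>A. A \<in> U \<or> - A \<in> U)"

text \<open>Non-principal: no singleton (equivalently no finite set) belongs to U.\<close>
definition nonprincipal_ultrafilter_on_nat :: "nat set set \<Rightarrow> bool" where
  "nonprincipal_ultrafilter_on_nat U \<longleftrightarrow> ultrafilter_on_nat U \<and> (\<forall>k. {k} \<notin> U)"

definition E_space :: "nat set set \<Rightarrow> nat topology" where
  "E_space U = topology (\<lambda>W. W = {} \<or> W \<in> U)"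

definition X_space :: "nat set set \<Rightarrow> nat \<Rightarrow> (nat \<times> nat) topology" where
  "X_space U n = topology (\<lambda>V. V = {} \<or>
     (\<exists>Q. (\<forall>i\<in>{1..n}. openin (E_space U) (Q i) \<and> Q i \<noteq> {}) \<and>
          V = (\<Union>i\<in>{1..n}. Q i \<times> {i})))"

definition S_space :: "nat set set \<Rightarrow> nat \<Rightarrow> nat \<Rightarrow> (nat \<times> nat) topology" where
  "S_space U n i = subtopology (X_space U n) (UNIV \<times> {i})"

end

theory Submission
  imports Defs
begin

lemma uf_facts:
  assumes "ultrafilter_on_nat U"
  shows uf_empty: "{} \<notin> U" and uf_univ: "UNIV \<in> U"
    and uf_int: "\<And>A B. A \<in> U \<Longrightarrow> B \<in> U \<Longrightarrow> A \<inter> B \<in> U"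
    and uf_mono: "\<And>A B. A \<in> U \<Longrightarrow> A \<subseteq> B \<Longrightarrow> B \<in> U"
    and uf_compl: "\<And>A. A \<in> U \<or> - A \<in> U"
  using assms unfolding ultrafilter_on_nat_def by blast+

lemma E_open:
  assumes "ultrafilter_on_nat U"
  shows "openin (E_space U) W \<longleftrightarrow> W = {} \<or> W \<in> U"
proof -
  have "istopology (\<lambda>W. W = {} \<or> W \<in> U)"
    unfolding istopology_def
  proof (intro conjI allI impI)
    fix S T assume "S = {} \<or> S \<in> U" "T = {} \<or> T \<in> U"
    then show "S \<inter> T = {} \<or> S \<inter> T \<in> U" using uf_int[OF assms] by blast
  next
    fix K :: "nat set set" assume K: "\<forall>W\<in>K. W = {} \<or> W \<in> U"
    show "\<Union>K = {} \<or> \<Union>K \<in> U"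
    proof (cases "\<Union>K = {}")
      case False
      then obtain W where "W \<in> K" "W \<noteq> {}" by auto
      with K have "W \<in> U" by auto
      moreover have "W \<subseteq> \<Union>K" using \<open>W \<in> K\<close> by auto
      ultimately show ?thesis using uf_mono[OF assms] by blast
    qed simp
  qed
  then show ?thesis unfolding E_space_def by (simp add: topology_inverse')
qed

lemma X_open:
  assumes u: "ultrafilter_on_nat U"
  shows "openin (X_space U n) V \<longleftrightarrow> V = {} \<or>
     (\<exists>Q. (\<forall>i\<in>{1..n}. Q i \<in> U) \<and> V = (\<Union>i\<in>{1..n}. Q i \<times> {i}))"
proof -
  have e: "openin (E_space U) W \<and> W \<noteq> {} \<longleftrightarrow> W \<in> U" for W
    using E_open[OF u] uf_empty[OF u] by auto
  let ?P = "\<lambda>V. V = {} \<or>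
     (\<exists>Q. (\<forall>i\<in>{1..n}. Q i \<in> U) \<and> V = (\<Union>i\<in>{1..n}. Q i \<times> {i}))"
  have top: "istopology ?P"
    unfolding istopology_def
  proof (intro conjI allI impI)
    fix S T assume S: "?P S" and T: "?P T"
    show "?P (S \<inter> T)"
    proof (cases "S = {} \<or> T = {}")
      case False
      then obtain Q1 Q2 where q1: "\<forall>i\<in>{1..n}. Q1 i \<in> U" "S = (\<Union>i\<in>{1..n}. Q1 i \<times> {i})"
        and q2: "\<forall>i\<in>{1..n}. Q2 i \<in> U" "T = (\<Union>i\<in>{1..n}. Q2 i \<times> {i})"
        using S T by blast
      have "\<forall>i\<in>{1..n}. Q1 i \<inter> Q2 i \<in> U" using q1 q2 uf_int[OF u] by blast
      moreover have "S \<inter> T = (\<Union>i\<in>{1..n}. (Q1 i \<inter> Q2 i) \<times> {i})"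
        using q1(2) q2(2) by auto
      ultimately show ?thesis by (intro disjI2 exI[where x="\<lambda>i. Q1 i \<inter> Q2 i"]) simp
    qed auto
  next
    fix K :: "(nat \<times> nat) set set" assume K: "\<forall>W\<in>K. ?P W"
    show "?P (\<Union>K)"
    proof (cases "\<Union>K = {}")
      case False
      then obtain W where "W \<in> K" "W \<noteq> {}" by auto
      with K obtain Q where q: "\<forall>i\<in>{1..n}. Q i \<in> U" "W = (\<Union>i\<in>{1..n}. Q i \<times> {i})" by blast
      define R where "R i = {x. (x, i) \<in> \<Union>K}" for i
      have "Q i \<subseteq> R i" if "i \<in> {1..n}" for i using q(2) \<open>W \<in> K\<close> that unfolding R_def by blast
      hence "\<forall>i\<in>{1..n}. R i \<in> U" using q(1) uf_mono[OF u] by blast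
      moreover have sub: "\<Union>K \<subseteq> UNIV \<times> {1..n}"
      proof
        fix p assume "p \<in> \<Union>K"
        then obtain W' where "W' \<in> K" "p \<in> W'" by auto
        with K obtain Q' where "W' = (\<Union>i\<in>{1..n}. Q' i \<times> {i})" by blast
        with \<open>p \<in> W'\<close> show "p \<in> UNIV \<times> {1..n}" by auto
      qed
      have "\<Union>K = (\<Union>i\<in>{1..n}. R i \<times> {i})"
      proof
        show "\<Union>K \<subseteq> (\<Union>i\<in>{1..n}. R i \<times> {i})"
        proof
          fix p assume p: "p \<in> \<Union>K"
          obtain a b where ab: "p = (a, b)" by force
          with sub p have "b \<in> {1..n}" by auto
          with p ab show "p \<in> (\<Union>i\<in>{1..n}. R i \<times> {i})" unfolding R_def by blast
        qed
      qed (auto simp: R_def)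
      ultimately show ?thesis by (intro disjI2 exI[where x=R]) simp
    qed simp
  qed
  have "?P = (\<lambda>V. V = {} \<or>
     (\<exists>Q. (\<forall>i\<in>{1..n}. openin (E_space U) (Q i) \<and> Q i \<noteq> {}) \<and>
          V = (\<Union>i\<in>{1..n}. Q i \<times> {i})))" (is "_ = ?R")
    using e by simp
  note eq0 = this
  then have top': "istopology ?R" using top by simp
  have "openin (X_space U n) = ?R" unfolding X_space_def by (rule topology_inverse'[OF top'])
  then have "openin (X_space U n) = ?P" using eq0 by simp
  then show ?thesis by simp
qed

theorem lemma6:
  fixes U :: "nat set set" and n :: nat and A :: "(nat \<times> nat) set"
  assumes "nonprincipal_ultrafilter_on_nat U"
    and "n \<ge> 1"
    and "A \<subseteq> topspace (X_space U n)"
    and "(X_space U n) closure_of A = topspace (X_space U n)"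
  shows "\<exists>i\<in>{1..n}. A \<inter> (UNIV \<times> {i}) \<noteq> {} \<and>
           openin (S_space U n i) (A \<inter> (UNIV \<times> {i}))"
proof -
  have u: "ultrafilter_on_nat U" using assms(1) unfolding nonprincipal_ultrafilter_on_nat_def by simp
  have dense: "\<And>T. openin (X_space U n) T \<Longrightarrow> T \<noteq> {} \<Longrightarrow> A \<inter> T \<noteq> {}"
    using assms(4) dense_intersects_open by blast
  define B where "B i = {x. (x, i) \<in> A}" for i
  have "\<exists>i\<in>{1..n}. B i \<in> U"
  proof (rule ccontr)
    assume "\<not> ?thesis"
    hence c: "\<forall>i\<in>{1..n}. - B i \<in> U" using uf_compl[OF u] by blast
    let ?T = "\<Union>i\<in>{1..n}. (- B i) \<times> {i}"
    have "openin (X_space U n) ?T" unfolding X_open[OF u] by (intro disjI2 exI[where x="\<lambda>i. - B i"]) (simp add: c)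
    moreover have "- B 1 \<noteq> {}" proof -
      have "- B 1 \<in> U" using c assms(2) by simp
      then show ?thesis using uf_empty[OF u] by metis
    qed
    hence "?T \<noteq> {}" using assms(2) by auto
    moreover have "A \<inter> ?T = {}" unfolding B_def by auto
    ultimately show False using dense by blast
  qed
  then obtain i where i: "i \<in> {1..n}" "B i \<in> U" by blast
  have ne: "B i \<noteq> {}" using i uf_empty[OF u] by auto
  define Q where "Q j = (if j = i then B i else UNIV)" for j
  have "\<forall>j\<in>{1..n}. Q j \<in> U" using i uf_univ[OF u] unfolding Q_def by auto
  hence op: "openin (X_space U n) (\<Union>j\<in>{1..n}. Q j \<times> {j})" unfolding X_open[OF u] by (intro disjI2 exI[where x=Q]) simp
  have eq: "A \<inter> (UNIV \<times> {i}) = (\<Union>j\<in>{1..n}. Q j \<times> {j}) \<inter> (UNIV \<times> {i})"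
    using i(1) unfolding Q_def B_def by auto
  have "openin (S_space U n i) (A \<inter> (UNIV \<times> {i}))"
    unfolding S_space_def openin_subtopology using op eq by blast
  moreover have "A \<inter> (UNIV \<times> {i}) \<noteq> {}" using ne unfolding B_def by auto
  ultimately show ?thesis using i(1) by blast
qed

end
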